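(* Let $X$ be a random variable taking values in a finite set $\mathcal{X}$ according to a PMF $P$, and let $f\colon\mathcal{X}\to\{1,\dots,|\mathcal{X}|\}$ be a bijection. Then $$\mathbb{E}[\log f(X)]\ \ge\ H(X)-\log\big(\ln|\mathcal{X}|+3/2\big).$$
   Context: $\log$ is base 2, $\ln$ is the natural logarithm, and $H(X)$ is the Shannon entropy (base 2) of $X$. *)

theory Defs
  imports "HOL-Probability.Probability"
begin

text \<open>Shannon entropy (base 2) of a discrete distribution with finite support,
  with the convention 0 log 0 = 0 (note log 2 0 = 0 in Isabelle).\<close>
definition shannon_entropy :: "'a pmf \<Rightarrow> real" where
  "shannon_entropy p = - (\<Sum>x\<in>set_pmf p. pmf p x * log 2 (pmf p x))"

end

theory Submission
  imports Defs "HOL-Analysis.Harmonic_Numbers"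
begin

lemma pointwise:
  fixes q u Z :: real
  assumes "q > 0" "u \<ge> 1" "Z > 0"
  shows "- q * log 2 q - q * log 2 u - q * log 2 Z \<le> (1/(u*Z) - q) / ln 2"
proof -
  have pos: "1/(u*Z*q) > 0" using assms by simp
  have "ln (1/(u*Z*q)) \<le> 1/(u*Z*q) - 1" by (rule ln_le_minus_one[OF pos])
  hence "q * ln (1/(u*Z*q)) \<le> q * (1/(u*Z*q) - 1)"
    using assms by (intro mult_left_mono) auto
  also have "q * (1/(u*Z*q) - 1) = 1/(u*Z) - q" using assms by (simp add: field_simps)
  finally have *: "q * ln (1/(u*Z*q)) \<le> 1/(u*Z) - q" .
  have "ln (1/(u*Z*q)) = - ln u - ln Z - ln q"
    using assms by (simp add: ln_div ln_mult)
  with * have "q * (- ln u - ln Z - ln q) \<le> 1/(u*Z) - q" by simp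
  hence "q * (- ln u - ln Z - ln q) / ln 2 \<le> (1/(u*Z) - q) / ln 2"
    by (intro divide_right_mono) auto
  moreover have "q * (- ln u - ln Z - ln q) / ln 2 = - q * log 2 q - q * log 2 u - q * log 2 Z"
    by (simp add: log_def field_simps)
  ultimately show ?thesis by simp
qed

theorem lemma4:
  fixes p :: "'a pmf" and A :: "'a set" and f :: "'a \<Rightarrow> nat"
  assumes "finite A" and "A \<noteq> {}"
    and "set_pmf p \<subseteq> A"
    and "bij_betw f A {1..card A}"
  shows "measure_pmf.expectation p (\<lambda>x. log 2 (real (f x)))
           \<ge> shannon_entropy p - log 2 (ln (real (card A)) + 3/2)"
proof -
  define S where "S = set_pmf p"
  define n where "n = card A"
  define Z :: real where "Z = harm n"
  have finS: "finite S" using assms(1,3) S_def finite_subset by auto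
  have n1: "n \<ge> 1" using assms(1,2) n_def by (simp add: Suc_le_eq card_gt_0_iff)
  have Zpos: "Z > 0" using n1 Z_def by simp
  have fge: "\<And>x. x \<in> A \<Longrightarrow> real (f x) \<ge> 1"
    using assms(4) n_def by (auto simp: bij_betw_def)
  have E: "measure_pmf.expectation p (\<lambda>x. log 2 (real (f x))) = (\<Sum>x\<in>S. log 2 (real (f x)) * pmf p x)"
    by (rule integral_measure_pmf_real) (use finS S_def in auto)
  have sum1: "(\<Sum>x\<in>S. pmf p x) = 1"
    using finS S_def by (simp add: sum_pmf_eq_1)
  have sumA: "(\<Sum>x\<in>A. 1 / (real (f x) * Z)) = 1"
  proof -
    have "(\<Sum>x\<in>A. 1 / (real (f x) * Z)) = (\<Sum>k\<in>{1..n}. 1 / (real k * Z))"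
      using assms(4) n_def by (intro sum.reindex_bij_betw) auto
    also have "\<dots> = (\<Sum>k\<in>{1..n}. 1 / real k) / Z" by (simp add: sum_divide_distrib)
    also have "(\<Sum>k\<in>{1..n}. 1 / real k) = Z"
      unfolding Z_def harm_def by (simp add: divide_inverse)
    finally show ?thesis using Zpos by simp
  qed
  have sumS: "(\<Sum>x\<in>S. 1 / (real (f x) * Z)) \<le> 1"
  proof -
    have "(\<Sum>x\<in>S. 1 / (real (f x) * Z)) \<le> (\<Sum>x\<in>A. 1 / (real (f x) * Z))"
      apply (rule sum_mono2)
      using assms(1,3) S_def Zpos by auto
    with sumA show ?thesis by simp
  qed
  have "(\<Sum>x\<in>S. - pmf p x * log 2 (pmf p x) - pmf p x * log 2 (real (f x)) - pmf p x * log 2 Z)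
        \<le> (\<Sum>x\<in>S. (1/(real (f x)*Z) - pmf p x) / ln 2)"
    apply (rule sum_mono)
    apply (rule pointwise)
    using S_def assms(3) fge Zpos by (auto simp: pmf_positive)
  also have "\<dots> = ((\<Sum>x\<in>S. 1/(real (f x)*Z)) - 1) / ln 2"
    by (simp add: sum_divide_distrib[symmetric] sum_subtractf sum1)
  also have "\<dots> \<le> 0" using sumS by (simp add: divide_nonpos_pos)
  finally have key: "shannon_entropy p - (\<Sum>x\<in>S. log 2 (real (f x)) * pmf p x) - log 2 Z \<le> 0"
    unfolding shannon_entropy_def S_def[symmetric]
    by (simp add: sum_subtractf sum_negf sum_distrib_right[symmetric] sum1 mult.commute)
  have "Z - ln (real n) \<le> harm 1 - ln (real (1::nat))"
    unfolding Z_def using n1 by (intro euler_mascheroni_sequence_decreasing) auto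
  hence "Z \<le> ln (real n) + 3/2" by (simp add: harm_def)
  hence "log 2 Z \<le> log 2 (ln (real n) + 3/2)" using Zpos by simp
  with key E show ?thesis unfolding n_def by simp
qed

end
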